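(* Let $Q$ be a locally point symmetric convex polytope in $\mathbb{R}^D$, and let $\mathbf{k} \in Q-Q$. The following statements are equivalent: (i) $Q\cap (Q-\mathbf{k})$ consists of a single point, i.e., $\mathbf{k}$ is a uniquely formed difference in $Q-Q$; (ii) $\mathbf{k}$ is a vertex of the polytope $Q-Q$; (iii) $\mathbf{k} = \mathbf{u}-\mathbf{v}$ for some strictly antipodal vertices $\mathbf{u}$ and $\mathbf{v}$ of $Q$.
   Context: $Q-Q=\{\mathbf{x}-\mathbf{y}:\mathbf{x},\mathbf{y}\in Q\}$ and $Q-\mathbf{k}=\{\mathbf{x}-\mathbf{k}:\mathbf{x}\in Q\}$. A vector $\mathbf{k}\in Q-Q$ is uniquely formed if there is a unique pair $\mathbf{s}_1,\mathbf{s}_2\in Q$ with $\mathbf{s}_1-\mathbf{s}_2=\mathbf{k}$. Two vertices $\mathbf{u},\mathbf{v}$ of a convex polytope $Q$ are strictly antipodal if there exist parallel supporting hyperplanes $H_1,H_2$ of $Q$ with $H_1\cap Q=\{\mathbf{u}\}$ and $H_2 \cap Q = \{\mathbf{v}\}$. The supporting cone of $Q$ at a vertex $\mathbf{v}$ is $C(\mathbf{v}) = \mathbf{v} + \bigcup_{\lambda \ge 0}\lambda(Q - \mathbf{v})$. A convex polytope $Q$ with $m$ vertices is locally point symmetric if its vertices can be partitioned into $m/2$ pairs of strictly antipodal vertices such that for each pair $\{\mathbf{u},\mathbf{v}\}$, $C(\mathbf{u}) - \mathbf{u} = \mathbf{v} - C(\mathbf{v})$. *)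

theory Defs
  imports "HOL-Analysis.Analysis" "HOL-Library.Disjoint_Sets"
begin

definition diff_set :: "'a::real_vector set \<Rightarrow> 'a set" where
  "diff_set Q = {x - y | x y. x \<in> Q \<and> y \<in> Q}"

definition translate_neg :: "'a::real_vector set \<Rightarrow> 'a \<Rightarrow> 'a set" where
  "translate_neg Q k = {x - k | x. x \<in> Q}"

definition vertices :: "'a::real_vector set \<Rightarrow> 'a set" where
  "vertices Q = {v. v extreme_point_of Q}"

definition uniquely_formed :: "'a::real_vector set \<Rightarrow> 'a \<Rightarrow> bool" where
  "uniquely_formed Q k \<longleftrightarrow> (\<exists>!p. fst p \<in> Q \<and> snd p \<in> Q \<and> fst p - snd p = k)"

definition supp_hyperplane :: "'a::euclidean_space set \<Rightarrow> 'a \<Rightarrow> real \<Rightarrow> bool" where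
  "supp_hyperplane Q a b \<longleftrightarrow> a \<noteq> 0 \<and> (\<forall>x\<in>Q. a \<bullet> x \<le> b) \<and> (\<exists>x\<in>Q. a \<bullet> x = b)"

text \<open>Strictly antipodal vertices: parallel supporting hyperplanes H1 = {a.x = b1},
  H2 = {(-a).x = b2} (Q lies between them) with H1 \<inter> Q = {u}, H2 \<inter> Q = {v}.\<close>
definition strictly_antipodal :: "'a::euclidean_space set \<Rightarrow> 'a \<Rightarrow> 'a \<Rightarrow> bool" where
  "strictly_antipodal Q u v \<longleftrightarrow>
     u \<in> vertices Q \<and> v \<in> vertices Q \<and>
     (\<exists>a b1 b2. supp_hyperplane Q a b1 \<and> supp_hyperplane Q (- a) b2 \<and>
        {x. a \<bullet> x = b1} \<inter> Q = {u} \<and> {x. (- a) \<bullet> x = b2} \<inter> Q = {v})"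

definition supp_cone :: "'a::real_vector set \<Rightarrow> 'a \<Rightarrow> 'a set" where
  "supp_cone Q v = {v + c *\<^sub>R (x - v) | c x. c \<ge> 0 \<and> x \<in> Q}"

definition locally_point_symmetric :: "'a::euclidean_space set \<Rightarrow> bool" where
  "locally_point_symmetric Q \<longleftrightarrow> polytope Q \<and>
     (\<exists>P. partition_on (vertices Q) P \<and>
        (\<forall>p\<in>P. \<exists>u v. p = {u, v} \<and> u \<noteq> v \<and> strictly_antipodal Q u v \<and>
           {c - u | c. c \<in> supp_cone Q u} = {v - c | c. c \<in> supp_cone Q v}))"

end

theory Submission
  imports Defs
begin

lemma good_exists:
  fixes V :: "'a::euclidean_space set"
  assumes "finite V" "s \<in> convex hull V"
  shows "\<exists>z\<in>V. \<exists>e>0. s + e *\<^sub>R (s - z) \<in> convex hull V"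
proof -
  obtain u where u: "\<forall>x\<in>V. 0 \<le> u x" "sum u V = 1" "(\<Sum>x\<in>V. u x *\<^sub>R x) = s"
    using assms convex_hull_finite[OF assms(1)] by auto
  have "\<exists>z\<in>V. u z > 0"
  proof (rule ccontr)
    assume "\<not> ?thesis"
    then have "\<forall>x\<in>V. u x = 0" using u(1) by force
    then show False using u(2) by simp
  qed
  then obtain z where z: "z \<in> V" "u z > 0" by blast
  define e where "e = u z"
  define w where "w = (\<lambda>x. (1 + e) * u x - (if x = z then e else 0))"
  have w0: "\<forall>x\<in>V. 0 \<le> w x"
  proof
    fix x assume "x \<in> V"
    show "0 \<le> w x"
    proof (cases "x = z")
      case True
      then show ?thesis unfolding w_def e_def using z by (simp add: algebra_simps)
    next
      case False
      then show ?thesis unfolding w_def using u(1) \<open>x \<in> V\<close> z e_def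
        by simp
    qed
  qed
  have "sum w V = (1 + e) * sum u V - e"
    unfolding w_def using z assms(1)
    by (simp add: sum_subtractf sum_distrib_left[symmetric] sum.delta')
  then have w1: "sum w V = 1" using u(2) by simp
  have "(\<Sum>x\<in>V. w x *\<^sub>R x) = (\<Sum>x\<in>V. (1+e) *\<^sub>R (u x *\<^sub>R x) - (if x = z then e *\<^sub>R z else 0))"
    by (rule sum.cong) (auto simp: w_def algebra_simps)
  also have "\<dots> = (1 + e) *\<^sub>R (\<Sum>x\<in>V. u x *\<^sub>R x) - e *\<^sub>R z"
    using z assms(1) by (simp add: sum_subtractf scaleR_sum_right sum.delta')
  finally have "(\<Sum>x\<in>V. w x *\<^sub>R x) = s + e *\<^sub>R (s - z)"
    using u(3) by (simp add: algebra_simps)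
  then have "s + e *\<^sub>R (s - z) \<in> convex hull V"
    using w0 w1 convex_hull_finite[OF assms(1)] by blast
  then show ?thesis using z e_def by blast
qed

lemma move:
  fixes p :: "'a::real_vector"
  assumes "convex Q" "p \<in> Q" "y \<in> Q" "e > 0" "p + e *\<^sub>R (p - z) \<in> Q"
    "0 \<le> t" "t \<le> e / (1 + e)"
  shows "p + t *\<^sub>R (y - z) \<in> Q"
proof -
  define t0 where "t0 = e / (1 + e)"
  have t0: "0 < t0" "t0 < 1" using assms(4) by (auto simp: t0_def field_simps)
  have eq: "(1 - t0) * e = t0" using assms(4) by (simp add: t0_def field_simps)
  have "(1 - t0) *\<^sub>R (p + e *\<^sub>R (p - z)) + t0 *\<^sub>R y = p + t0 *\<^sub>R (y - z)"
  proof -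
    have "(1 - t0) *\<^sub>R (p + e *\<^sub>R (p - z)) = (1 - t0) *\<^sub>R p + ((1 - t0) * e) *\<^sub>R (p - z)"
      by (simp add: algebra_simps)
    also have "\<dots> = (1 - t0) *\<^sub>R p + t0 *\<^sub>R (p - z)" using eq by simp
    finally show ?thesis by (simp add: algebra_simps)
  qed
  moreover have "(1 - t0) *\<^sub>R (p + e *\<^sub>R (p - z)) + t0 *\<^sub>R y \<in> Q"
    using assms(1,3,5) t0 by (simp add: convexD)
  ultimately have q: "p + t0 *\<^sub>R (y - z) \<in> Q" by simp
  define l where "l = t / t0"
  have "t \<le> t0" using assms(7) t0_def by simp
  then have l: "0 \<le> l" "l \<le> 1" using assms(6) t0 by (auto simp: l_def field_simps)
  have "(1 - l) *\<^sub>R p + l *\<^sub>R (p + t0 *\<^sub>R (y - z)) = p + (l * t0) *\<^sub>R (y - z)"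
    by (simp add: algebra_simps)
  moreover have "l * t0 = t" using t0 by (simp add: l_def)
  moreover have "(1 - l) *\<^sub>R p + l *\<^sub>R (p + t0 *\<^sub>R (y - z)) \<in> Q"
    using assms(1,2) q l by (simp add: convexD)
  ultimately show ?thesis by simp
qed


lemma tn_mem: "y \<in> translate_neg Q k \<longleftrightarrow> y + k \<in> Q"
  unfolding translate_neg_def by (auto intro!: exI[of _ "y + k"])

lemma ds_mem: "z \<in> diff_set Q \<longleftrightarrow> (\<exists>x y. x \<in> Q \<and> y \<in> Q \<and> z = x - y)"
  unfolding diff_set_def by auto

lemma neg_eq: "(a::'a::real_vector) - b = m *\<^sub>R (c - d) \<Longrightarrow> b - a = m *\<^sub>R (d - c)"
  by (metis minus_diff_eq scaleR_minus_right)

lemma contra: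
  fixes Q :: "'a::real_vector set"
  assumes "convex Q" "s1 \<in> Q" "s2 \<in> Q" "y1 \<in> Q" "y2 \<in> Q"
    "e1 > 0" "s1 + e1 *\<^sub>R (s1 - z1) \<in> Q" "e2 > 0" "s2 + e2 *\<^sub>R (s2 - z2) \<in> Q"
    and uniq: "\<forall>y. y \<in> Q \<and> y + k \<in> Q \<longrightarrow> y = s2" and s1: "s1 = s2 + k"
    and d1: "d = a *\<^sub>R (y1 - z1)" and d2: "d = b *\<^sub>R (y2 - z2)" and "0 \<le> a" "0 \<le> b"
  shows "d = 0"
proof (rule ccontr)
  assume dn: "d \<noteq> 0"
  then have a: "a > 0" using d1 \<open>0 \<le> a\<close> by (cases "a = 0") auto
  have b: "b > 0" using d2 dn \<open>0 \<le> b\<close> by (cases "b = 0") auto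
  define t where "t = min (e1 / (1 + e1) / a) (e2 / (1 + e2) / b)"
  have t0: "t > 0" using a b assms(6,8) by (simp add: t_def)
  have ta: "t * a \<le> e1 / (1 + e1)"
  proof -
    have "t \<le> e1 / (1 + e1) / a" by (simp add: t_def)
    then show ?thesis using pos_le_divide_eq[OF a] by blast
  qed
  have tb: "t * b \<le> e2 / (1 + e2)"
  proof -
    have "t \<le> e2 / (1 + e2) / b" by (simp add: t_def)
    then show ?thesis using pos_le_divide_eq[OF b] by blast
  qed
  have "s1 + (t * a) *\<^sub>R (y1 - z1) \<in> Q"
    by (rule move[OF assms(1,2,4,6,7)]) (use t0 a ta in auto)
  then have q1: "s1 + t *\<^sub>R d \<in> Q" using d1 by simp
  have "s2 + (t * b) *\<^sub>R (y2 - z2) \<in> Q"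
    by (rule move[OF assms(1,3,5,8,9)]) (use t0 b tb in auto)
  then have q2: "s2 + t *\<^sub>R d \<in> Q" using d2 by simp
  have "(s2 + t *\<^sub>R d) + k \<in> Q" using q1 s1 by (simp add: algebra_simps)
  then have "s2 + t *\<^sub>R d = s2" using uniq q2 by blast
  then show False using t0 dn by simp
qed

lemma cone_cl1:
  assumes "{c - p | c. c \<in> supp_cone Q p} = {q - c | c. c \<in> supp_cone Q q}"
  shows "\<forall>(l::real) y. l \<ge> 0 \<longrightarrow> y \<in> Q \<longrightarrow> (\<exists>m y'. m \<ge> 0 \<and> y' \<in> Q \<and> l *\<^sub>R (y - p) = m *\<^sub>R (q - y'))"
proof (intro allI impI)
  fix l :: real and y assume l: "l \<ge> 0" and y: "y \<in> Q"
  have "p + l *\<^sub>R (y - p) \<in> supp_cone Q p" unfolding supp_cone_def using l y by blast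
  then have "l *\<^sub>R (y - p) \<in> {c - p | c. c \<in> supp_cone Q p}" by force
  then have "l *\<^sub>R (y - p) \<in> {q - c | c. c \<in> supp_cone Q q}" using assms by simp
  then obtain m y' where "m \<ge> 0" "y' \<in> Q" "l *\<^sub>R (y - p) = q - (q + m *\<^sub>R (y' - q))"
    unfolding supp_cone_def by blast
  then show "\<exists>m y'. m \<ge> 0 \<and> y' \<in> Q \<and> l *\<^sub>R (y - p) = m *\<^sub>R (q - y')"
    by (metis add_diff_cancel_left' diff_0 minus_diff_eq scaleR_minus_right diff_add_cancel)
qed

lemma cone_cl2:
  assumes "{c - p | c. c \<in> supp_cone Q p} = {q - c | c. c \<in> supp_cone Q q}"
  shows "\<forall>(l::real) y. l \<ge> 0 \<longrightarrow> y \<in> Q \<longrightarrow> (\<exists>m y'. m \<ge> 0 \<and> y' \<in> Q \<and> l *\<^sub>R (y - q) = m *\<^sub>R (p - y'))"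
proof (intro allI impI)
    fix l :: real and y assume l: "l \<ge> 0" and y: "y \<in> Q"
    have "q + l *\<^sub>R (y - q) \<in> supp_cone Q q" unfolding supp_cone_def using l y by blast
    then have "q - (q + l *\<^sub>R (y - q)) \<in> {q - c | c. c \<in> supp_cone Q q}" by blast
    then have "q - (q + l *\<^sub>R (y - q)) \<in> {c - p | c. c \<in> supp_cone Q p}" using assms by simp
    then obtain m y' where "m \<ge> 0" "y' \<in> Q" "q - (q + l *\<^sub>R (y - q)) = (p + m *\<^sub>R (y' - p)) - p"
      unfolding supp_cone_def by blast
    then have "- (l *\<^sub>R (y - q)) = m *\<^sub>R (y' - p)" by simp
    then have "l *\<^sub>R (y - q) = m *\<^sub>R (p - y')"
      by (metis minus_diff_eq minus_minus scaleR_minus_right)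
    then show "\<exists>m y'. m \<ge> 0 \<and> y' \<in> Q \<and> l *\<^sub>R (y - q) = m *\<^sub>R (p - y')"
      using \<open>m \<ge> 0\<close> \<open>y' \<in> Q\<close> by blast
qed

lemma sa_sym: "strictly_antipodal Q u v \<Longrightarrow> strictly_antipodal Q v u"
  unfolding strictly_antipodal_def
  by (metis minus_minus)

lemma sa_max:
  fixes Q :: "'a::euclidean_space set"
  assumes "supp_hyperplane Q a b1" "supp_hyperplane Q (-a) b2"
    "{x. a \<bullet> x = b1} \<inter> Q = {u}" "{x. (-a) \<bullet> x = b2} \<inter> Q = {v}" "x \<in> Q" "y \<in> Q"
  shows "a \<bullet> (x - y) \<le> a \<bullet> (u - v)"
    and "a \<bullet> (x - y) \<ge> a \<bullet> (u - v) \<Longrightarrow> x = u \<and> y = v"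
proof -
  have u: "a \<bullet> u = b1" using assms(3) by blast
  have v: "(-a) \<bullet> v = b2" using assms(4) by blast
  have x: "a \<bullet> x \<le> b1" using assms(1,5) unfolding supp_hyperplane_def by blast
  have y: "(-a) \<bullet> y \<le> b2" using assms(2,6) unfolding supp_hyperplane_def by blast
  show "a \<bullet> (x - y) \<le> a \<bullet> (u - v)" using u v x y by (simp add: inner_diff_right)
  assume "a \<bullet> (x - y) \<ge> a \<bullet> (u - v)"
  then have "a \<bullet> x = b1" "(-a) \<bullet> y = b2" using u v x y by (simp_all add: inner_diff_right)
  then show "x = u \<and> y = v" using assms(3,4,5,6) by blast
qed


lemma polytope_hull:
  fixes Q :: "'a::euclidean_space set"
  assumes "polytope Q"
  shows "finite (vertices Q)" "Q = convex hull (vertices Q)" "convex Q"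
proof -
  obtain S where S: "finite S" "Q = convex hull S" using assms unfolding polytope_def by blast
  show "finite (vertices Q)" unfolding vertices_def
    using finite_polyhedron_extreme_points[OF polytope_imp_polyhedron[OF assms]] .
  show "Q = convex hull (vertices Q)" unfolding vertices_def using Krein_Milman_polytope[OF S(1)] S(2) by simp
  show "convex Q" using S(2) by simp
qed

lemma i_to_iii:
  fixes Q :: "'a::euclidean_space set"
  assumes lps: "locally_point_symmetric Q" and one: "Q \<inter> translate_neg Q k = {x}"
  shows "\<exists>u v. strictly_antipodal Q u v \<and> k = u - v"
proof -
  have pt: "polytope Q" using lps unfolding locally_point_symmetric_def by blast
  obtain P where P: "partition_on (vertices Q) P"
    and Pp: "\<forall>p\<in>P. \<exists>u v. p = {u, v} \<and> u \<noteq> v \<and> strictly_antipodal Q u v \<and>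
           {c - u | c. c \<in> supp_cone Q u} = {v - c | c. c \<in> supp_cone Q v}"
    using lps unfolding locally_point_symmetric_def by blast
  note H = polytope_hull[OF pt]
  have xQ: "x \<in> Q" and xkQ: "x + k \<in> Q" using one tn_mem by blast+
  have uniq: "\<forall>y. y \<in> Q \<and> y + k \<in> Q \<longrightarrow> y = x" using one tn_mem by blast
  obtain u e1 where u: "u \<in> vertices Q" "e1 > 0" "(x + k) + e1 *\<^sub>R ((x + k) - u) \<in> Q"
    using good_exists[OF H(1), of "x + k"] xkQ H(2) by auto
  obtain w e2 where w: "w \<in> vertices Q" "e2 > 0" "x + e2 *\<^sub>R (x - w) \<in> Q"
    using good_exists[OF H(1), of x] xQ H(2) by auto
  have "w \<in> \<Union>P" using P w(1) unfolding partition_on_def by blast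
  then obtain blk where "blk \<in> P" "w \<in> blk" by blast
  have ex: "\<exists>u v. blk = {u, v} \<and> u \<noteq> v \<and> strictly_antipodal Q u v \<and>
           {c - u | c. c \<in> supp_cone Q u} = {v - c | c. c \<in> supp_cone Q v}"
    by (rule bspec[OF Pp \<open>blk \<in> P\<close>])
  obtain p q where pqc: "blk = {p, q} \<and> p \<noteq> q \<and> strictly_antipodal Q p q \<and>
           {c - p | c. c \<in> supp_cone Q p} = {q - c | c. c \<in> supp_cone Q q}"
    using ex by (elim exE) (erule that)
  have pq: "blk = {p, q}" "strictly_antipodal Q p q"
    "{c - p | c. c \<in> supp_cone Q p} = {q - c | c. c \<in> supp_cone Q q}"
    using pqc by (rule conjunct1, rule conjunct1[OF conjunct2[OF conjunct2]], rule conjunct2[OF conjunct2[OF conjunct2]])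
  note cc1 = cone_cl1[OF pq(3)] and cc2 = cone_cl2[OF pq(3)]
  obtain w' where sa: "strictly_antipodal Q w' w"
    and C1: "\<forall>(l::real) y. l \<ge> 0 \<longrightarrow> y \<in> Q \<longrightarrow> (\<exists>m y'. m \<ge> 0 \<and> y' \<in> Q \<and> l *\<^sub>R (y - w') = m *\<^sub>R (w - y'))"
    and C2: "\<forall>(l::real) y. l \<ge> 0 \<longrightarrow> y \<in> Q \<longrightarrow> (\<exists>m y'. m \<ge> 0 \<and> y' \<in> Q \<and> l *\<^sub>R (y - w) = m *\<^sub>R (w' - y'))"
  proof (cases "w = q")
    case True
    show ?thesis
      apply (rule that[of p])
      subgoal unfolding True by (rule pq(2))
      subgoal unfolding True by (rule cc1)
      subgoal unfolding True by (rule cc2)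
      done
  next
    case False
    then have F: "w = p" using pq(1) \<open>w \<in> blk\<close> by simp
    show ?thesis
      apply (rule that[of q])
      subgoal unfolding F by (rule sa_sym[OF pq(2)])
      subgoal unfolding F by (rule cc2)
      subgoal unfolding F by (rule cc1)
      done
  qed
  have cQ: "convex Q" using H(3) .
  have vQ: "\<And>z. z \<in> vertices Q \<Longrightarrow> z \<in> Q" by (metis H(2) hull_inc)
  have uQ: "u \<in> Q" and wQ: "w \<in> Q" using u(1) w(1) vQ by auto
  have "w' \<in> vertices Q" using sa unfolding strictly_antipodal_def by (rule conjunct1)
  then have w'Q: "w' \<in> Q" by (rule vQ)
  obtain m y' where m: "m \<ge> 0" "y' \<in> Q" "1 *\<^sub>R (u - w') = m *\<^sub>R (w - y')"
    using C1 uQ by (meson zero_le_one)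
  have d2: "w' - u = m *\<^sub>R (y' - w)" using neg_eq[of u w' m w y'] m(3) by simp
  have "w' - u = 0"
    by (rule contra[OF cQ xkQ xQ w'Q m(2) u(2) u(3) w(2) w(3) uniq _ _ d2, of 1]) (use m in auto)
  then have wu: "w' = u" by simp
  obtain m2 y2 where m2: "m2 \<ge> 0" "y2 \<in> Q" "1 *\<^sub>R ((x + k) - w') = m2 *\<^sub>R (w - y2)"
    using C1 xkQ by (meson zero_le_one)
  have d2': "u - (x + k) = m2 *\<^sub>R (y2 - w)" using neg_eq[of "x + k" w' m2 w y2] m2(3) wu by simp
  have s1: "(x + k) + 1 *\<^sub>R ((x + k) - (x + k)) \<in> Q" using xkQ by simp
  have "u - (x + k) = 0"
    by (rule contra[OF cQ xkQ xQ uQ m2(2) _ s1 w(2) w(3) uniq _ _ d2', of 1]) (use m2 in auto)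
  then have s1u: "x + k = u" by simp
  obtain m3 y3 where m3: "m3 \<ge> 0" "y3 \<in> Q" "1 *\<^sub>R (x - w) = m3 *\<^sub>R (w' - y3)"
    using C2 xQ by (meson zero_le_one)
  have d3: "w - x = m3 *\<^sub>R (y3 - u)" using neg_eq[of x w m3 w' y3] m3(3) wu by simp
  have s2: "x + 1 *\<^sub>R (x - x) \<in> Q" using xQ by simp
  have "w - x = 0"
    by (rule contra[OF cQ xkQ xQ m3(2) wQ u(2) u(3) _ s2 uniq _ d3, of 1]) (use m3 in auto)
  then have "x = w" by simp
  then have "k = w' - w" using s1u wu by (simp add: algebra_simps)
  then show ?thesis using sa by blast
qed


lemma iii_to_i:
  fixes Q :: "'a::euclidean_space set"
  assumes "strictly_antipodal Q u v" "k = u - v"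
  shows "Q \<inter> translate_neg Q k = {v}"
proof -
  obtain a b1 b2 where h: "supp_hyperplane Q a b1" "supp_hyperplane Q (- a) b2"
        "{x. a \<bullet> x = b1} \<inter> Q = {u}" "{x. (- a) \<bullet> x = b2} \<inter> Q = {v}"
    using assms(1) unfolding strictly_antipodal_def by blast
  have uQ: "u \<in> Q" using h(3) by blast
  have vQ: "v \<in> Q" using h(4) by blast
  show ?thesis
  proof (rule set_eqI, rule iffI)
    fix y assume "y \<in> Q \<inter> translate_neg Q k"
    then have y: "y \<in> Q" "y + k \<in> Q" using tn_mem by blast+
    have "a \<bullet> ((y + k) - y) \<ge> a \<bullet> (u - v)" using assms(2) by simp
    then have "y + k = u \<and> y = v" using sa_max(2)[OF h y(2) y(1)] by blast
    then show "y \<in> {v}" by simp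
  next
    fix y assume "y \<in> {v}"
    then show "y \<in> Q \<inter> translate_neg Q k" using vQ uQ assms(2) by (simp add: tn_mem)
  qed
qed

lemma ii_to_i:
  fixes Q :: "'a::euclidean_space set"
  assumes "k \<in> vertices (diff_set Q)" "k \<in> diff_set Q"
  shows "\<exists>x. Q \<inter> translate_neg Q k = {x}"
proof -
  obtain x0 y0 where xy: "x0 \<in> Q" "y0 \<in> Q" "k = x0 - y0" using assms(2) ds_mem by blast
  have y0: "y0 \<in> Q \<inter> translate_neg Q k" using xy by (simp add: tn_mem)
  have ext: "k extreme_point_of diff_set Q" using assms(1) unfolding vertices_def by simp
  have "\<forall>y \<in> Q \<inter> translate_neg Q k. y = y0"
  proof (rule ballI, rule ccontr)
    fix y assume y: "y \<in> Q \<inter> translate_neg Q k" and ne: "y \<noteq> y0"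
    have yy: "y \<in> Q" "y + k \<in> Q" "y0 \<in> Q" "y0 + k \<in> Q" using y y0 tn_mem by blast+
    define k1 where "k1 = (y + k) - y0"
    define k2 where "k2 = (y0 + k) - y"
    have k1: "k1 \<in> diff_set Q" using yy ds_mem k1_def by blast
    have k2: "k2 \<in> diff_set Q" using yy ds_mem k2_def by blast
    have "k1 - k2 = 2 *\<^sub>R (y - y0)" by (simp add: k1_def k2_def algebra_simps scaleR_2)
    then have "k1 \<noteq> k2" using ne by auto
    moreover have "k = (1 - 1/2) *\<^sub>R k1 + (1/2) *\<^sub>R k2"
    proof -
      have s: "k1 + k2 = 2 *\<^sub>R k" by (simp add: k1_def k2_def scaleR_2 algebra_simps)
      have "(1 - 1/2) *\<^sub>R k1 + (1/2) *\<^sub>R k2 = (1/2::real) *\<^sub>R (k1 + k2)"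
        by (simp add: scaleR_add_right)
      also have "\<dots> = k" using s by simp
      finally show ?thesis by simp
    qed
    ultimately have "k \<in> open_segment k1 k2" unfolding in_segment
      by (intro conjI exI[of _ "1/2"]) auto
    then show False using ext k1 k2 unfolding extreme_point_of_def by blast
  qed
  then have "Q \<inter> translate_neg Q k = {y0}" using y0 by blast
  then show ?thesis by blast
qed

lemma iii_to_ii:
  fixes Q :: "'a::euclidean_space set"
  assumes "strictly_antipodal Q u v" "k = u - v"
  shows "k \<in> vertices (diff_set Q)"
proof -
  obtain a b1 b2 where h: "supp_hyperplane Q a b1" "supp_hyperplane Q (- a) b2"
        "{x. a \<bullet> x = b1} \<inter> Q = {u}" "{x. (- a) \<bullet> x = b2} \<inter> Q = {v}"
    using assms(1) unfolding strictly_antipodal_def by blast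
  have uQ: "u \<in> Q" using h(3) by blast
  have vQ: "v \<in> Q" using h(4) by blast
  have kD: "k \<in> diff_set Q" using uQ vQ assms(2) ds_mem by blast
  have le: "\<And>z. z \<in> diff_set Q \<Longrightarrow> a \<bullet> z \<le> a \<bullet> k"
  proof -
    fix z assume "z \<in> diff_set Q"
    then obtain x y where xy: "x \<in> Q" "y \<in> Q" "z = x - y" unfolding ds_mem by blast
    show "a \<bullet> z \<le> a \<bullet> k" using sa_max(1)[OF h xy(1) xy(2)] xy(3) assms(2) by simp
  qed
  have eqk: "\<And>z. z \<in> diff_set Q \<Longrightarrow> a \<bullet> z \<ge> a \<bullet> k \<Longrightarrow> z = k"
  proof -
    fix z assume "z \<in> diff_set Q" "a \<bullet> z \<ge> a \<bullet> k"
    then obtain x y where xy: "x \<in> Q" "y \<in> Q" "z = x - y" unfolding ds_mem by blast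
    have "a \<bullet> (x - y) \<ge> a \<bullet> (u - v)" using \<open>a \<bullet> z \<ge> a \<bullet> k\<close> xy(3) assms(2) by simp
    then have "x = u \<and> y = v" by (rule sa_max(2)[OF h xy(1) xy(2)])
    then show "z = k" using xy(3) assms(2) by simp
  qed
  have "k extreme_point_of diff_set Q"
    unfolding extreme_point_of_def
  proof (intro conjI kD ballI notI)
    fix p q assume p: "p \<in> diff_set Q" and q: "q \<in> diff_set Q" and kin: "k \<in> open_segment p q"
    then obtain t where t: "p \<noteq> q" "0 < t" "t < 1" "k = (1 - t) *\<^sub>R p + t *\<^sub>R q"
      unfolding in_segment by blast
    have A: "a \<bullet> k = (1 - t) * (a \<bullet> p) + t * (a \<bullet> q)" using t(4) by (simp add: inner_add_right)
    have P: "a \<bullet> p \<le> a \<bullet> k" using le p .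
    have Qq: "a \<bullet> q \<le> a \<bullet> k" using le q .
    have "a \<bullet> p \<ge> a \<bullet> k"
    proof (rule ccontr)
      assume "\<not> ?thesis"
      then have "(1 - t) * (a \<bullet> p) < (1 - t) * (a \<bullet> k)" using t(3) by (simp add: mult_strict_left_mono)
      moreover have "t * (a \<bullet> q) \<le> t * (a \<bullet> k)" using Qq t(2) by (simp add: mult_left_mono)
      ultimately show False using A by (simp add: algebra_simps)
    qed
    then have "p = k" using eqk p by blast
    have "a \<bullet> q \<ge> a \<bullet> k"
    proof (rule ccontr)
      assume "\<not> ?thesis"
      then have "t * (a \<bullet> q) < t * (a \<bullet> k)" using t(2) by (simp add: mult_strict_left_mono)
      moreover have "(1 - t) * (a \<bullet> p) \<le> (1 - t) * (a \<bullet> k)" using P t(3) by (simp add: mult_left_mono)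
      ultimately show False using A by (simp add: algebra_simps)
    qed
    then have "q = k" using eqk q by blast
    then show False using \<open>p = k\<close> t(1) by simp
  qed
  then show ?thesis unfolding vertices_def by simp
qed

lemma i_uf:
  "(\<exists>x. Q \<inter> translate_neg Q k = {x}) \<longleftrightarrow> uniquely_formed Q k"
proof
  assume "\<exists>x. Q \<inter> translate_neg Q k = {x}"
  then obtain x where x: "Q \<inter> translate_neg Q k = {x}" by blast
  have xQ: "x \<in> Q" "x + k \<in> Q" using x tn_mem by blast+
  show "uniquely_formed Q k" unfolding uniquely_formed_def
  proof (rule ex1I[of _ "(x + k, x)"])
    show "fst (x + k, x) \<in> Q \<and> snd (x + k, x) \<in> Q \<and> fst (x + k, x) - snd (x + k, x) = k" using xQ by simp
  next
    fix p :: "'a \<times> 'a" assume p: "fst p \<in> Q \<and> snd p \<in> Q \<and> fst p - snd p = k"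
    obtain a b where ab: "p = (a, b)" by (cases p)
    have a: "a = b + k" using p ab by auto
    have "b \<in> Q \<inter> translate_neg Q k" using p ab a by (simp add: tn_mem)
    then have "b = x" using x by blast
    then show "p = (x + k, x)" using ab a by simp
  qed
next
  assume "uniquely_formed Q k"
  then have h: "\<exists>!p. fst p \<in> Q \<and> snd p \<in> Q \<and> fst p - snd p = k" unfolding uniquely_formed_def .
  obtain p where p: "fst p \<in> Q \<and> snd p \<in> Q \<and> fst p - snd p = k"
    and un: "\<forall>p'. fst p' \<in> Q \<and> snd p' \<in> Q \<and> fst p' - snd p' = k \<longrightarrow> p' = p"
    by (rule ex1E[OF h]) (rule that)
  have "Q \<inter> translate_neg Q k = {snd p}"
  proof (rule set_eqI, rule iffI)
    fix y assume "y \<in> Q \<inter> translate_neg Q k"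
    then have "y \<in> Q" "y + k \<in> Q" by (simp_all add: tn_mem)
    then have "(y + k, y) = p" using un by simp
    then show "y \<in> {snd p}" by auto
  next
    fix y assume "y \<in> {snd p}"
    then have "y = snd p" by simp
    moreover have "snd p + k = fst p" using p by (simp add: algebra_simps)
    ultimately show "y \<in> Q \<inter> translate_neg Q k" using p by (simp add: tn_mem)
  qed
  then show "\<exists>x. Q \<inter> translate_neg Q k = {x}" by blast
qed

theorem lemma13:
  fixes Q :: "'a::euclidean_space set" and k :: 'a
  assumes "locally_point_symmetric Q"
    and "k \<in> diff_set Q"
  shows "((\<exists>x. Q \<inter> translate_neg Q k = {x}) \<longleftrightarrow> k \<in> vertices (diff_set Q))
       \<and> (k \<in> vertices (diff_set Q) \<longleftrightarrow> (\<exists>u v. strictly_antipodal Q u v \<and> k = u - v))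
       \<and> ((\<exists>x. Q \<inter> translate_neg Q k = {x}) \<longleftrightarrow> uniquely_formed Q k)"
proof -
  have A: "(\<exists>x. Q \<inter> translate_neg Q k = {x}) \<Longrightarrow> (\<exists>u v. strictly_antipodal Q u v \<and> k = u - v)"
    using i_to_iii[OF assms(1)] by blast
  have B: "(\<exists>u v. strictly_antipodal Q u v \<and> k = u - v) \<Longrightarrow> k \<in> vertices (diff_set Q)"
    using iii_to_ii by blast
  have C: "k \<in> vertices (diff_set Q) \<Longrightarrow> (\<exists>x. Q \<inter> translate_neg Q k = {x})"
    using ii_to_i assms(2) by blast
  show ?thesis using A B C i_uf by blast
qed

end
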